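(* Let $X$ be a topological vector space over $\mathbb{K}$, let $M\subset X$, and let $\alpha\ge\aleph_0$ be a cardinal with $w(X)\le\alpha$. Then: (i) $M$ is pointwise $\alpha$-dense-lineable if and only if $M$ is $\alpha$-infinitely pointwise $\alpha$-dense-lineable; (ii) for every cardinal $\gamma<\alpha$, $M$ is $(\gamma,\alpha)$-dense-lineable if and only if $M$ is $\alpha$-infinitely $(\gamma,\alpha)$-dense-lineable.
   Context: The weight $w(X)$ is the smallest cardinality of a base for the topology of $X$. $M$ is $\gamma$-lineable if there is a linear subspace of dimension $\gamma$ contained in $M\cup\{0\}$. $M$ is pointwise $\alpha$-dense-lineable if for each $x\in M$ there is a dense linear subspace $Y$ of $X$ with $\dim(Y)=\alpha$ and $x\in Y\subset M\cup\{0\}$. $M$ is $\alpha$-infinitely pointwise $\alpha$-dense-lineable if for each $x\in M$ there is a family $\{Y_\kappa\}_{\kappa<\alpha}$ of dense $\alpha$-dimensional subspaces of $X$ with $x\in Y_\kappa\subset M\cup\{0\}$ for all $\kappa$ and $Y_{\kappa_1}\cap Y_{\kappa_2}=\mathrm{span}(x)$ for $\kappa_1\ne\kappa_2$. For $\gamma<\alpha$, $M$ is $(\gamma,\alpha)$-dense-lineable if $M$ is $\gamma$-lineable and for every $\gamma$-dimensional subspace $W\subset M\cup\{0\}$ there is a dense $\alpha$-dimensional subspace $Y$ of $X$ with $W\subset Y\subset M\cup\{0\}$. $M$ is $\alpha$-infinitely $(\gamma,\alpha)$-dense-lineable if $M$ is $\gamma$-lineable and for every $\gamma$-dimensional subspace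 $W\subset M\cup\{0\}$ there is a family $\{Y_\kappa\}_{\kappa<\alpha}$ of dense $\alpha$-dimensional subspaces of $X$ with $W\subset Y_\kappa\subset M\cup\{0\}$ for all $\kappa$ and $Y_{\kappa_1}\cap Y_{\kappa_2}=W$ for $\kappa_1\neq\kappa_2$. *)

theory Defs
  imports "HOL-Analysis.Analysis"
begin

definition tvs :: "('k::real_normed_field \<Rightarrow> 'a::{ab_group_add,topological_space} \<Rightarrow> 'a) \<Rightarrow> bool" where
  "tvs sm \<longleftrightarrow> vector_space sm
     \<and> continuous_on UNIV (\<lambda>p::'a \<times> 'a. fst p + snd p)
     \<and> continuous_on UNIV (\<lambda>p::'k \<times> 'a. sm (fst p) (snd p))"

definition weight_le :: "'a::topological_space itself \<Rightarrow> 'i set \<Rightarrow> bool" where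
  "weight_le X I \<longleftrightarrow> (\<exists>B::'a set set. topological_basis B \<and> (card_of B, card_of I) \<in> ordLeq)"

definition dim_eq :: "('k::field \<Rightarrow> 'a::ab_group_add \<Rightarrow> 'a) \<Rightarrow> 'a set \<Rightarrow> 'i set \<Rightarrow> bool" where
  "dim_eq sm Y I \<longleftrightarrow> (\<exists>B. \<not> module.dependent sm B \<and> module.span sm B = Y \<and> (card_of B, card_of I) \<in> ordIso)"

definition dense_subspace :: "('k::field \<Rightarrow> 'a::{ab_group_add,topological_space} \<Rightarrow> 'a) \<Rightarrow> 'a set \<Rightarrow> bool" where
  "dense_subspace sm Y \<longleftrightarrow> module.subspace sm Y \<and> closure Y = UNIV"

definition lineable :: "('k::field \<Rightarrow> 'a::ab_group_add \<Rightarrow> 'a) \<Rightarrow> 'a set \<Rightarrow> 'g set \<Rightarrow> bool" where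
  "lineable sm M G \<longleftrightarrow> (\<exists>W. module.subspace sm W \<and> dim_eq sm W G \<and> W \<subseteq> M \<union> {0})"

definition pointwise_dense_lineable ::
  "('k::field \<Rightarrow> 'a::{ab_group_add,topological_space} \<Rightarrow> 'a) \<Rightarrow> 'a set \<Rightarrow> 'i set \<Rightarrow> bool" where
  "pointwise_dense_lineable sm M I \<longleftrightarrow>
     (\<forall>x\<in>M. \<exists>Y. dense_subspace sm Y \<and> dim_eq sm Y I \<and> x \<in> Y \<and> Y \<subseteq> M \<union> {0})"

definition infinitely_pointwise_dense_lineable ::
  "('k::field \<Rightarrow> 'a::{ab_group_add,topological_space} \<Rightarrow> 'a) \<Rightarrow> 'a set \<Rightarrow> 'i set \<Rightarrow> bool" where
  "infinitely_pointwise_dense_lineable sm M I \<longleftrightarrow>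
     (\<forall>x\<in>M. \<exists>Y :: 'i \<Rightarrow> 'a set.
        (\<forall>k\<in>I. dense_subspace sm (Y k) \<and> dim_eq sm (Y k) I \<and> x \<in> Y k \<and> Y k \<subseteq> M \<union> {0})
      \<and> (\<forall>k1\<in>I. \<forall>k2\<in>I. k1 \<noteq> k2 \<longrightarrow> Y k1 \<inter> Y k2 = module.span sm {x}))"

definition dense_lineable2 ::
  "('k::field \<Rightarrow> 'a::{ab_group_add,topological_space} \<Rightarrow> 'a) \<Rightarrow> 'a set \<Rightarrow> 'g set \<Rightarrow> 'i set \<Rightarrow> bool" where
  "dense_lineable2 sm M G I \<longleftrightarrow> lineable sm M G \<and>
     (\<forall>W. module.subspace sm W \<and> dim_eq sm W G \<and> W \<subseteq> M \<union> {0} \<longrightarrow>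
        (\<exists>Y. dense_subspace sm Y \<and> dim_eq sm Y I \<and> W \<subseteq> Y \<and> Y \<subseteq> M \<union> {0}))"

definition infinitely_dense_lineable2 ::
  "('k::field \<Rightarrow> 'a::{ab_group_add,topological_space} \<Rightarrow> 'a) \<Rightarrow> 'a set \<Rightarrow> 'g set \<Rightarrow> 'i set \<Rightarrow> bool" where
  "infinitely_dense_lineable2 sm M G I \<longleftrightarrow> lineable sm M G \<and>
     (\<forall>W. module.subspace sm W \<and> dim_eq sm W G \<and> W \<subseteq> M \<union> {0} \<longrightarrow>
        (\<exists>Y :: 'i \<Rightarrow> 'a set.
           (\<forall>k\<in>I. dense_subspace sm (Y k) \<and> dim_eq sm (Y k) I \<and> W \<subseteq> Y k \<and> Y k \<subseteq> M \<union> {0})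
         \<and> (\<forall>k1\<in>I. \<forall>k2\<in>I. k1 \<noteq> k2 \<longrightarrow> Y k1 \<inter> Y k2 = W)))"

end

theory Submission
  imports Defs
begin

unbundle cardinal_syntax


context vector_space begin

lemma indep_card_le_span:
  assumes "independent B" "B \<subseteq> span T"
  shows "|B| \<le>o |T|"
proof -
  obtain C where C: "C \<subseteq> T" "independent C" "T \<subseteq> span C"
    using maximal_independent_subset by blast
  obtain B2 where B2: "B \<subseteq> B2" "B2 \<subseteq> span T" "independent B2" "span T \<subseteq> span B2"
    using maximal_independent_subset_extend[OF assms(2,1)] by blast
  have "span B2 = span T"
    using B2 by (meson span_minimal subspace_span subset_antisym)
  moreover have "span C = span T"
    using C span_minimal[of T "span C"] span_mono[of C T] by auto
  ultimately obtain h where "bij_betw h B2 C"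
    using bij_if_span_eq_span_bases[OF B2(3) C(2)] by auto
  then have "|B2| =o |C|" using card_of_ordIso by blast
  moreover have "|B| \<le>o |B2|" using B2(1) card_of_mono1 by blast
  moreover have "|C| \<le>o |T|" using C(1) card_of_mono1 by blast
  ultimately show ?thesis
    using ordIso_iff_ordLeq ordLeq_transitive by blast
qed

lemma span_Un_Int_sub:
  assumes "independent (A \<union> B \<union> C)" "B \<inter> C = {}"
  shows "span (A \<union> B) \<inter> span (A \<union> C) \<subseteq> span A"
proof
  fix v assume v: "v \<in> span (A \<union> B) \<inter> span (A \<union> C)"
  let ?S = "A \<union> B \<union> C"
  have e1: "representation ?S v = representation (A \<union> B) v"
    using representation_extend[OF assms(1)] v by auto
  have e2: "representation ?S v = representation (A \<union> C) v"
    using representation_extend[OF assms(1)] v by auto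
  have sub: "{b. representation ?S v b \<noteq> 0} \<subseteq> A"
  proof
    fix b assume "b \<in> {b. representation ?S v b \<noteq> 0}"
    then have "representation (A \<union> B) v b \<noteq> 0" "representation (A \<union> C) v b \<noteq> 0"
      using e1 e2 by auto
    then have "b \<in> A \<union> B" "b \<in> A \<union> C"
      using representation_ne_zero by blast+
    then show "b \<in> A" using assms(2) by auto
  qed
  have vS: "v \<in> span ?S" using v span_mono[of "A \<union> B" ?S] by auto
  have "v = (\<Sum>b | representation ?S v b \<noteq> 0. representation ?S v b *s b)"
    using sum_nonzero_representation_eq[OF assms(1) vS] by simp
  also have "\<dots> \<in> span A"
    by (intro span_sum span_scale span_base) (use sub in auto)
  finally show "v \<in> span A" .
qed

end


lemma escape:
  fixes sm :: "'k::real_normed_field \<Rightarrow> 'a::{ab_group_add,topological_space} \<Rightarrow> 'a"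
  assumes tv: "tvs sm" and S: "module.subspace sm S" and z: "z \<notin> S" and U: "open U" "y0 \<in> U"
  shows "\<exists>c. y0 + sm c z \<in> U \<and> y0 + sm c z \<notin> S"
proof -
  interpret vector_space sm using tv unfolding tvs_def by auto
  have ca: "continuous_on UNIV (\<lambda>p::'a \<times> 'a. fst p + snd p)"
    and cs: "continuous_on UNIV (\<lambda>p::'k \<times> 'a. sm (fst p) (snd p))"
    using tv unfolding tvs_def by auto
  define t where "t n = (of_real (inverse (real (Suc n))) :: 'k)" for n
  have "t \<longlonglongrightarrow> of_real 0"
    unfolding t_def by (rule tendsto_of_real[OF LIMSEQ_inverse_real_of_nat])
  then have t0: "t \<longlonglongrightarrow> 0" by simp
  have "(\<lambda>n. (t n, z)) \<longlonglongrightarrow> (0, z)"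
    by (intro tendsto_Pair t0 tendsto_const)
  from continuous_on_tendsto_compose[OF cs this] 
  have "(\<lambda>n. sm (t n) z) \<longlonglongrightarrow> sm 0 z"
    by simp
  then have "(\<lambda>n. sm (t n) z) \<longlonglongrightarrow> 0" by simp
  then have "(\<lambda>n. (y0, sm (t n) z)) \<longlonglongrightarrow> (y0, 0)"
    by (intro tendsto_Pair tendsto_const)
  from continuous_on_tendsto_compose[OF ca this]
  have "(\<lambda>n. y0 + sm (t n) z) \<longlonglongrightarrow> y0"
    by simp
  from topological_tendstoD[OF this U]
  obtain N where N: "\<And>n. n \<ge> N \<Longrightarrow> y0 + sm (t n) z \<in> U"
    unfolding eventually_sequentially by blast
  show ?thesis
  proof (rule ccontr)
    assume "\<not> ?thesis"
    then have a: "y0 + sm (t N) z \<in> S" and b: "y0 + sm (t (Suc N)) z \<in> S"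
      using N[of N] N[of "Suc N"] by auto
    have "(y0 + sm (t N) z) - (y0 + sm (t (Suc N)) z) \<in> S"
      using subspace_diff[OF S a b] .
    then have d: "sm (t N - t (Suc N)) z \<in> S"
      by (simp add: scale_left_diff_distrib)
    have ne: "t N - t (Suc N) \<noteq> 0"
      unfolding t_def by simp
    have "sm (inverse (t N - t (Suc N))) (sm (t N - t (Suc N)) z) \<in> S"
      using subspace_scale[OF S d] .
    then have "z \<in> S" using ne by simp
    with z show False by simp
  qed
qed



context vector_space begin
lemma chain_indep:
  assumes r: "Well_order r" and A: "A \<subseteq> Field r"
    and ind: "\<forall>b\<in>A. independent (BW \<union> f ` under r b)" and BW: "independent BW"
  shows "independent (BW \<union> f ` (\<Union>b\<in>A. under r b))"
proof -
  have tot: "total_on (Field r) r" and tr: "trans r"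
    using r unfolding well_order_on_def linear_order_on_def partial_order_on_def preorder_on_def by auto
  have mono: "under r b1 \<subseteq> under r b2" if "(b1, b2) \<in> r" for b1 b2
    using that tr unfolding under_def trans_def by blast
  have eq: "BW \<union> f ` (\<Union>b\<in>A. under r b) = \<Union> (insert BW ((\<lambda>b. BW \<union> f ` under r b) ` A))"
    by auto
  show ?thesis
    unfolding eq
  proof (rule independent_Union_directed)
    fix c d assume c: "c \<in> insert BW ((\<lambda>b. BW \<union> f ` under r b) ` A)"
      and d: "d \<in> insert BW ((\<lambda>b. BW \<union> f ` under r b) ` A)"
    show "c \<subseteq> d \<or> d \<subseteq> c"
    proof (cases "c = BW \<or> d = BW")
      case True then show ?thesis using c d by auto
    next
      case False
      then obtain b1 b2 where b: "b1 \<in> A" "b2 \<in> A" "c = BW \<union> f ` under r b1" "d = BW \<union> f ` under r b2"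
        using c d by auto
      have "b1 = b2 \<or> (b1, b2) \<in> r \<or> (b2, b1) \<in> r"
        using tot b(1,2) A unfolding total_on_def by blast
      then show ?thesis using mono b(3,4) by blast
    qed
  next
    fix c assume "c \<in> insert BW ((\<lambda>b. BW \<union> f ` under r b) ` A)"
    then show "independent c" using ind BW by auto
  qed
qed
end

lemma under_union_underS:
  assumes r: "Well_order r"
  shows "(\<Union>b\<in>underS r a. under r b) = underS r a"
proof -
  have tr: "trans r" and an: "antisym r" and rf: "refl_on (Field r) r"
    using r unfolding well_order_on_def linear_order_on_def partial_order_on_def preorder_on_def by auto
  show ?thesis
  proof
    show "(\<Union>b\<in>underS r a. under r b) \<subseteq> underS r a"
      using tr an unfolding under_def underS_def trans_def antisym_def by blast
  next
    show "underS r a \<subseteq> (\<Union>b\<in>underS r a. under r b)"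
    proof
      fix c assume c: "c \<in> underS r a"
      then have "c \<in> Field r" unfolding underS_def Field_def by auto
      then have "(c, c) \<in> r" using rf unfolding refl_on_def by auto
      then show "c \<in> (\<Union>b\<in>underS r a. under r b)" using c unfolding under_def by auto
    qed
  qed
qed

lemma under_union_Field:
  assumes r: "Well_order r"
  shows "(\<Union>b\<in>Field r. under r b) = Field r"
proof -
  have rf: "refl_on (Field r) r"
    using r unfolding well_order_on_def linear_order_on_def partial_order_on_def preorder_on_def by auto
  show ?thesis
  proof
    show "(\<Union>b\<in>Field r. under r b) \<subseteq> Field r"
      unfolding under_def Field_def by auto
    show "Field r \<subseteq> (\<Union>b\<in>Field r. under r b)"
      using rf unfolding refl_on_def under_def by auto
  qed
qed

lemma under_insert:
  assumes r: "Well_order r" and a: "a \<in> Field r"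
  shows "under r a = insert a (underS r a)"
proof -
  have rf: "refl_on (Field r) r"
    using r unfolding well_order_on_def linear_order_on_def partial_order_on_def preorder_on_def by auto
  then show ?thesis using a unfolding under_def underS_def refl_on_def by auto
qed



lemma dense_from_meets:
  assumes "\<And>V. open V \<Longrightarrow> V \<noteq> {} \<Longrightarrow> V \<inter> Y \<noteq> {}"
  shows "closure Y = UNIV"
proof (rule ccontr)
  assume "closure Y \<noteq> UNIV"
  then have "- closure Y \<noteq> {}" by auto
  moreover have "open (- closure Y)" by auto
  moreover have "(- closure Y) \<inter> closure Y = {}" by auto
  ultimately show False using assms open_Int_closure_eq_empty by metis
qed

lemma main_constr:
  fixes sm :: "'k::real_normed_field \<Rightarrow> 'a::{ab_group_add,topological_space} \<Rightarrow> 'a"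
    and I :: "'i set" and W Y BW :: "'a set"
  assumes tv: "tvs sm" and inf: "infinite I" and wl: "weight_le TYPE('a) I"
    and Yd: "dense_subspace sm Y" and Ydim: "dim_eq sm Y I"
    and BWi: "\<not> module.dependent sm BW" and BWs: "module.span sm BW = W" and WY: "W \<subseteq> Y"
    and BWc: "|BW| <o |I|"
  shows "\<exists>Yf :: 'i \<Rightarrow> 'a set. (\<forall>k\<in>I. dense_subspace sm (Yf k) \<and> dim_eq sm (Yf k) I \<and> W \<subseteq> Yf k \<and> Yf k \<subseteq> Y)
           \<and> (\<forall>k1\<in>I. \<forall>k2\<in>I. k1 \<noteq> k2 \<longrightarrow> Yf k1 \<inter> Yf k2 = W)"
proof -
  interpret vector_space sm using tv unfolding tvs_def by auto
  obtain B :: "'a set set" where B: "topological_basis B" "|B| \<le>o |I|"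
    using wl unfolding weight_le_def by auto
  have "B \<noteq> {}"
  proof
    assume "B = {}"
    obtain B' where "B' \<subseteq> B" "\<Union>B' = (UNIV :: 'a set)"
      using B(1) unfolding topological_basis_def by (meson open_UNIV)
    with \<open>B = {}\<close> show False by auto
  qed
  then obtain g where g: "g ` I = B" using card_of_ordLeq2[OF \<open>B \<noteq> {}\<close>, of I] B(2) by blast
  obtain BY where BY: "independent BY" "span BY = Y" "|BY| =o |I|"
    using Ydim unfolding dim_eq_def by auto
  have Ysub: "subspace Y" and Ycl: "closure Y = UNIV"
    using Yd unfolding dense_subspace_def by auto
  have meets: "U \<inter> Y \<noteq> {}" if "open U" "U \<noteq> {}" for U
    using that Ycl open_Int_closure_eq_empty[of U Y] by auto
  define r0 where "r0 = |I \<times> I|"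
  have r0C: "Card_order r0" unfolding r0_def by (rule card_of_Card_order)
  have r0W: "Well_order r0" unfolding r0_def by (rule card_of_Well_order)
  have r0F: "Field r0 = I \<times> I" unfolding r0_def by (rule Field_card_of)
  have r0I: "r0 =o |I|" unfolding r0_def by (rule card_of_Times_same_infinite[OF inf])
  define P where "P T a y \<longleftrightarrow> y \<in> Y \<and> y \<notin> span (BW \<union> T) \<and> (g (snd a) \<noteq> {} \<longrightarrow> y \<in> g (snd a))"
    for T :: "'a set" and a :: "'i \<times> 'i" and y
  have exP: "\<exists>y. P T a y" if T: "|T| <o |I|" and a: "a \<in> I \<times> I" for T a
  proof -
    let ?S = "span (BW \<union> T)"
    have c: "|BW \<union> T| <o |I|" using card_of_Un_ordLess_infinite[OF inf BWc T] .
    obtain z where z: "z \<in> Y" "z \<notin> ?S"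
    proof (rule ccontr)
      assume "\<not> thesis"
      then have "Y \<subseteq> ?S" using that by blast
      then have "BY \<subseteq> ?S" using BY(2) span_superset[of BY] by auto
      then have "|BY| \<le>o |BW \<union> T|" by (rule indep_card_le_span[OF BY(1)])
      then have "|BY| <o |I|" using c by (rule ordLeq_ordLess_trans)
      then have "|I| <o |I|" by (rule ordIso_ordLess_trans[OF ordIso_symmetric[OF BY(3)]])
      then show False using ordLess_irreflexive by blast
    qed
    define U where "U = (if g (snd a) \<noteq> {} then g (snd a) else UNIV)"
    have "g (snd a) \<in> B" using g a by auto
    then have oU: "open U" unfolding U_def using B(1) topological_basis_open by auto
    have "U \<noteq> {}" unfolding U_def by auto
    then obtain y0 where y0: "y0 \<in> U" "y0 \<in> Y" using meets oU by blast
    obtain c where cc: "y0 + sm c z \<in> U" "y0 + sm c z \<notin> ?S"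
      using escape[OF tv subspace_span z(2) oU y0(1)] by blast
    have "y0 + sm c z \<in> Y" by (rule subspace_add[OF Ysub y0(2) subspace_scale[OF Ysub z(1)]])
    then show ?thesis using cc unfolding P_def U_def by (auto split: if_splits)
  qed
  define R where "R = r0 - Id"
  have wfR: "wf R" unfolding R_def using r0W wo_rel.WF wo_rel_def by blast
  define H where "H h a = (SOME y. P (h ` underS r0 a) a y)" for h :: "'i \<times> 'i \<Rightarrow> 'a" and a
  define f where "f = wfrec R H"
  have feq: "f a = (SOME y. P (f ` underS r0 a) a y)" for a
  proof -
    have "f a = H (cut f R a) a" unfolding f_def by (rule wfrec[OF wfR])
    moreover have "(cut f R a) ` underS r0 a = f ` underS r0 a"
      unfolding underS_def R_def by (auto simp: cut_apply)
    ultimately show ?thesis unfolding H_def by simp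
  qed
  have fP: "P (f ` underS r0 a) a (f a)" if a: "a \<in> I \<times> I" for a
  proof -
    have "|f ` underS r0 a| \<le>o |underS r0 a|" by (rule card_of_image)
    moreover have "|underS r0 a| <o r0" using card_of_underS[OF r0C] a r0F by auto
    ultimately have "|f ` underS r0 a| <o |I|"
      using r0I ordLeq_ordLess_trans ordLess_ordIso_trans by blast
    then have "\<exists>y. P (f ` underS r0 a) a y" using exP a by blast
    then show ?thesis unfolding feq[of a] by (rule someI_ex)
  qed
  have indA: "\<forall>a. a \<in> I \<times> I \<longrightarrow> independent (BW \<union> f ` under r0 a)"
  proof (intro allI)
    fix a show "a \<in> I \<times> I \<longrightarrow> independent (BW \<union> f ` under r0 a)"
    proof (induct a rule: wf_induct[OF wfR])
      case (1 a)
      show ?case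
      proof
        assume a: "a \<in> I \<times> I"
        have sub: "underS r0 a \<subseteq> Field r0" unfolding underS_def Field_def by auto
        have "\<forall>b\<in>underS r0 a. independent (BW \<union> f ` under r0 b)"
          using 1 sub r0F unfolding underS_def R_def by auto
        from chain_indep[OF r0W sub this BWi]
        have "independent (BW \<union> f ` underS r0 a)" unfolding under_union_underS[OF r0W] .
        moreover have "f a \<notin> span (BW \<union> f ` underS r0 a)" using fP[OF a] unfolding P_def by auto
        ultimately have "independent (insert (f a) (BW \<union> f ` underS r0 a))"
          by (rule independent_insertI[rotated])
        moreover have "insert (f a) (BW \<union> f ` underS r0 a) = BW \<union> f ` under r0 a"
          using under_insert[OF r0W, of a] a r0F by auto
        ultimately show "independent (BW \<union> f ` under r0 a)" by simp
      qed
    qed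
  qed
  have indAll: "independent (BW \<union> f ` (I \<times> I))"
    using chain_indep[OF r0W order_refl, of BW f] indA BWi r0F under_union_Field[OF r0W] by auto
  have tot: "total_on (Field r0) r0"
    using r0W unfolding well_order_on_def linear_order_on_def by auto
  have fne: "f a \<noteq> f b" if "a \<in> I \<times> I" "b \<in> I \<times> I" "(a, b) \<in> r0" "a \<noteq> b" for a b
  proof
    assume "f a = f b"
    have "a \<in> underS r0 b" using that unfolding underS_def by auto
    then have "f a \<in> span (BW \<union> f ` underS r0 b)" by (intro span_base) auto
    then show False using fP[OF that(2)] \<open>f a = f b\<close> unfolding P_def by auto
  qed
  have finj: "inj_on f (I \<times> I)"
  proof (rule inj_onI)
    fix a b assume ab: "a \<in> I \<times> I" "b \<in> I \<times> I" "f a = f b"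
    show "a = b"
    proof (rule ccontr)
      assume "a \<noteq> b"
      then have "(a, b) \<in> r0 \<or> (b, a) \<in> r0" using tot ab r0F unfolding total_on_def by auto
      then show False using fne ab \<open>a \<noteq> b\<close> by metis
    qed
  qed
  define Yf where "Yf k = span (BW \<union> f ` ({k} \<times> I))" for k
  have fY: "f a \<in> Y" if "a \<in> I \<times> I" for a using fP[OF that] unfolding P_def by auto
  have BWY: "BW \<subseteq> Y" using BWs WY span_superset by blast
  have good: "dense_subspace sm (Yf k) \<and> dim_eq sm (Yf k) I \<and> W \<subseteq> Yf k \<and> Yf k \<subseteq> Y" if k: "k \<in> I" for k
  proof (intro conjI)
    have "V \<inter> Yf k \<noteq> {}" if V: "open V" "V \<noteq> {}" for V
    proof -
      obtain x where "x \<in> V" using V by auto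
      then obtain B' where B': "B' \<in> B" "x \<in> B'" "B' \<subseteq> V"
        using topological_basisE[OF B(1) V(1)] by blast
      then obtain j where j: "j \<in> I" "B' = g j" using g by auto
      have kj: "(k, j) \<in> I \<times> I" using k j by auto
      have "f (k, j) \<in> g j" using fP[OF kj] B' j unfolding P_def by auto
      moreover have "f (k, j) \<in> Yf k" unfolding Yf_def using j by (intro span_base) auto
      ultimately show ?thesis using B' j by auto
    qed
    then show "dense_subspace sm (Yf k)"
      unfolding dense_subspace_def Yf_def using dense_from_meets by auto
  next
    let ?Bk = "BW \<union> f ` ({k} \<times> I)"
    have i: "independent ?Bk" by (rule independent_mono[OF indAll]) (use k in auto)
    have le: "|?Bk| \<le>o |I|"
    proof -
      have "|f ` ({k} \<times> I)| \<le>o |I \<times> I|"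
        using card_of_image card_of_mono1[of "{k} \<times> I" "I \<times> I"] k ordLeq_transitive by blast
      then have "|f ` ({k} \<times> I)| \<le>o |I|" using card_of_Times_same_infinite[OF inf] ordLeq_ordIso_trans by blast
      moreover have "|BW| \<le>o |I|" using BWc ordLess_imp_ordLeq by blast
      ultimately show ?thesis
        by (intro card_of_Un_ordLeq_infinite_Field[of "|I|"]) (simp_all add: Field_card_of card_of_Card_order card_of_card_order_on inf)
    qed
    have ge: "|I| \<le>o |?Bk|"
    proof -
      have "inj_on (\<lambda>i. f (k, i)) I" using finj k unfolding inj_on_def by auto
      moreover have "(\<lambda>i. f (k, i)) ` I \<subseteq> ?Bk" by auto
      ultimately show ?thesis using card_of_ordLeq by blast
    qed
    show "dim_eq sm (Yf k) I"
      unfolding dim_eq_def Yf_def using i le ge ordIso_iff_ordLeq by blast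
  next
    show "W \<subseteq> Yf k" unfolding Yf_def BWs[symmetric] by (rule span_mono) auto
  next
    show "Yf k \<subseteq> Y" unfolding Yf_def using BWY fY k by (intro span_minimal Ysub) auto
  qed
  have inter: "Yf k1 \<inter> Yf k2 = W" if k: "k1 \<in> I" "k2 \<in> I" "k1 \<noteq> k2" for k1 k2
  proof
    have "independent (BW \<union> f ` ({k1} \<times> I) \<union> f ` ({k2} \<times> I))"
      by (rule independent_mono[OF indAll]) (use k in auto)
    moreover have "f ` ({k1} \<times> I) \<inter> f ` ({k2} \<times> I) = {}"
      using finj k unfolding inj_on_def by auto
    ultimately show "Yf k1 \<inter> Yf k2 \<subseteq> W"
      unfolding Yf_def BWs[symmetric] by (rule span_Un_Int_sub)
  next
    show "W \<subseteq> Yf k1 \<inter> Yf k2" using good k by auto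
  qed
  show ?thesis using good inter by blast
qed



theorem theorem3p3:
  fixes sm :: "'k::real_normed_field \<Rightarrow> 'a::{ab_group_add,topological_space} \<Rightarrow> 'a"
    and M :: "'a set" and I :: "'i set"
  assumes "tvs sm"
    and "infinite I"
    and "weight_le TYPE('a) I"
  shows "(pointwise_dense_lineable sm M I \<longleftrightarrow> infinitely_pointwise_dense_lineable sm M I)
       \<and> (\<forall>G :: 'g set. (card_of G, card_of I) \<in> ordLess \<longrightarrow>
            (dense_lineable2 sm M G I \<longleftrightarrow> infinitely_dense_lineable2 sm M G I))"
proof -
  interpret vector_space sm using assms(1) unfolding tvs_def by auto
  have "I \<noteq> {}" using assms(2) by auto
  then obtain k0 where k0: "k0 \<in> I" by blast
  have p1: "pointwise_dense_lineable sm M I \<longleftrightarrow> infinitely_pointwise_dense_lineable sm M I"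
  proof
    assume h: "pointwise_dense_lineable sm M I"
    show "infinitely_pointwise_dense_lineable sm M I"
      unfolding infinitely_pointwise_dense_lineable_def
    proof
      fix x assume x: "x \<in> M"
      obtain Y where Y: "dense_subspace sm Y" "dim_eq sm Y I" "x \<in> Y" "Y \<subseteq> M \<union> {0}"
        using h x unfolding pointwise_dense_lineable_def by blast
      define BW where "BW = (if x = 0 then {} else {x})"
      have fin: "finite BW" unfolding BW_def by auto
      have i: "independent BW" unfolding BW_def using independent_empty independent_insertI[of x "{}"]
        by (auto simp: span_empty)
      have s: "span BW = span {x}" unfolding BW_def by (auto simp: span_empty)
      have c: "|BW| <o |I|" using finite_ordLess_infinite[OF card_of_Well_order card_of_Well_order] fin assms(2) by (simp add: Field_card_of)
      have Ysub: "subspace Y" using Y(1) unfolding dense_subspace_def by auto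
      have WY: "span {x} \<subseteq> Y" using Y(3) Ysub by (intro span_minimal) auto
      have ex: "\<exists>Yf :: 'i \<Rightarrow> 'a set. (\<forall>k\<in>I. dense_subspace sm (Yf k) \<and> dim_eq sm (Yf k) I \<and> span {x} \<subseteq> Yf k \<and> Yf k \<subseteq> Y)
           \<and> (\<forall>k1\<in>I. \<forall>k2\<in>I. k1 \<noteq> k2 \<longrightarrow> Yf k1 \<inter> Yf k2 = span {x})"
        by (rule main_constr[OF assms(1,2,3) Y(1,2) i s WY c])
      from ex obtain Yf :: "'i \<Rightarrow> 'a set" where YfC:
        "(\<forall>k\<in>I. dense_subspace sm (Yf k) \<and> dim_eq sm (Yf k) I \<and> span {x} \<subseteq> Yf k \<and> Yf k \<subseteq> Y)
           \<and> (\<forall>k1\<in>I. \<forall>k2\<in>I. k1 \<noteq> k2 \<longrightarrow> Yf k1 \<inter> Yf k2 = span {x})" ..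
      note Yf = conjunct1[OF YfC] conjunct2[OF YfC]
      have "x \<in> span {x}" by (rule span_base) auto
      show "\<exists>Y :: 'i \<Rightarrow> 'a set.
        (\<forall>k\<in>I. dense_subspace sm (Y k) \<and> dim_eq sm (Y k) I \<and> x \<in> Y k \<and> Y k \<subseteq> M \<union> {0})
      \<and> (\<forall>k1\<in>I. \<forall>k2\<in>I. k1 \<noteq> k2 \<longrightarrow> Y k1 \<inter> Y k2 = span {x})"
      proof (intro exI[of _ Yf] conjI ballI impI)
        fix k assume k: "k \<in> I"
        show "dense_subspace sm (Yf k)" "dim_eq sm (Yf k) I" using Yf(1) k by auto
        show "Yf k \<subseteq> M \<union> {0}" using Yf(1) k Y(4) by auto
        show "x \<in> Yf k" using Yf(1) k \<open>x \<in> span {x}\<close> by auto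
      next
        fix k1 k2 assume "k1 \<in> I" "k2 \<in> I" "k1 \<noteq> k2"
        then show "Yf k1 \<inter> Yf k2 = span {x}" using Yf(2) by auto
      qed
    qed
  next
    assume h: "infinitely_pointwise_dense_lineable sm M I"
    show "pointwise_dense_lineable sm M I"
      unfolding pointwise_dense_lineable_def
    proof
      fix x assume xM: "x \<in> M"
      have "\<exists>Y :: 'i \<Rightarrow> 'a set.
        (\<forall>k\<in>I. dense_subspace sm (Y k) \<and> dim_eq sm (Y k) I \<and> x \<in> Y k \<and> Y k \<subseteq> M \<union> {0})
      \<and> (\<forall>k1\<in>I. \<forall>k2\<in>I. k1 \<noteq> k2 \<longrightarrow> Y k1 \<inter> Y k2 = span {x})"
        using h[unfolded infinitely_pointwise_dense_lineable_def] xM by (rule bspec)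
      then obtain Y :: "'i \<Rightarrow> 'a set" where YC:
        "(\<forall>k\<in>I. dense_subspace sm (Y k) \<and> dim_eq sm (Y k) I \<and> x \<in> Y k \<and> Y k \<subseteq> M \<union> {0})
      \<and> (\<forall>k1\<in>I. \<forall>k2\<in>I. k1 \<noteq> k2 \<longrightarrow> Y k1 \<inter> Y k2 = span {x})" ..
      have "dense_subspace sm (Y k0) \<and> dim_eq sm (Y k0) I \<and> x \<in> Y k0 \<and> Y k0 \<subseteq> M \<union> {0}"
        using conjunct1[OF YC] k0 by (rule bspec)
      then show "\<exists>Y. dense_subspace sm Y \<and> dim_eq sm Y I \<and> x \<in> Y \<and> Y \<subseteq> M \<union> {0}"
        by (rule exI)
    qed
  qed
  have p2: "dense_lineable2 sm M G I \<longleftrightarrow> infinitely_dense_lineable2 sm M G I"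
    if G: "(card_of G, card_of I) \<in> ordLess" for G :: "'g set"
  proof
    assume h: "dense_lineable2 sm M G I"
    show "infinitely_dense_lineable2 sm M G I"
      unfolding infinitely_dense_lineable2_def
    proof (intro conjI allI impI)
      show "lineable sm M G" using h unfolding dense_lineable2_def by (rule conjunct1)
    next
      fix W assume W: "subspace W \<and> dim_eq sm W G \<and> W \<subseteq> M \<union> {0}"
      have "\<exists>Y. dense_subspace sm Y \<and> dim_eq sm Y I \<and> W \<subseteq> Y \<and> Y \<subseteq> M \<union> {0}"
        using conjunct2[OF h[unfolded dense_lineable2_def], rule_format, OF W] .
      then obtain Y where YC: "dense_subspace sm Y \<and> dim_eq sm Y I \<and> W \<subseteq> Y \<and> Y \<subseteq> M \<union> {0}" ..
      note Y = conjunct1[OF YC] conjunct1[OF conjunct2[OF YC]] conjunct1[OF conjunct2[OF conjunct2[OF YC]]]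
        conjunct2[OF conjunct2[OF conjunct2[OF YC]]]
      have Wd: "dim_eq sm W G" using conjunct1[OF conjunct2[OF W]] .
      have "\<exists>B. \<not> module.dependent sm B \<and> module.span sm B = W \<and> (card_of B, card_of G) \<in> ordIso"
        using Wd unfolding dim_eq_def .
      then obtain BW where BWC: "\<not> module.dependent sm BW \<and> module.span sm BW = W \<and> (card_of BW, card_of G) \<in> ordIso" ..
      note BW = conjunct1[OF BWC] conjunct1[OF conjunct2[OF BWC]] conjunct2[OF conjunct2[OF BWC]]
      have c: "|BW| <o |I|" using ordIso_ordLess_trans[OF BW(3) G] .
      have ex: "\<exists>Yf :: 'i \<Rightarrow> 'a set. (\<forall>k\<in>I. dense_subspace sm (Yf k) \<and> dim_eq sm (Yf k) I \<and> W \<subseteq> Yf k \<and> Yf k \<subseteq> Y)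
           \<and> (\<forall>k1\<in>I. \<forall>k2\<in>I. k1 \<noteq> k2 \<longrightarrow> Yf k1 \<inter> Yf k2 = W)"
        by (rule main_constr[OF assms(1,2,3) Y(1,2) BW(1,2) Y(3) c])
      from ex obtain Yf :: "'i \<Rightarrow> 'a set" where YfC:
        "(\<forall>k\<in>I. dense_subspace sm (Yf k) \<and> dim_eq sm (Yf k) I \<and> W \<subseteq> Yf k \<and> Yf k \<subseteq> Y)
           \<and> (\<forall>k1\<in>I. \<forall>k2\<in>I. k1 \<noteq> k2 \<longrightarrow> Yf k1 \<inter> Yf k2 = W)" ..
      note Yf = conjunct1[OF YfC] conjunct2[OF YfC]
      show "\<exists>Y :: 'i \<Rightarrow> 'a set.
           (\<forall>k\<in>I. dense_subspace sm (Y k) \<and> dim_eq sm (Y k) I \<and> W \<subseteq> Y k \<and> Y k \<subseteq> M \<union> {0})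
         \<and> (\<forall>k1\<in>I. \<forall>k2\<in>I. k1 \<noteq> k2 \<longrightarrow> Y k1 \<inter> Y k2 = W)"
      proof (intro exI[of _ Yf] conjI ballI impI)
        fix k assume k: "k \<in> I"
        show "dense_subspace sm (Yf k)" "dim_eq sm (Yf k) I" using Yf(1) k by auto
        show "Yf k \<subseteq> M \<union> {0}" using Yf(1) k Y(4) by auto
        show "W \<subseteq> Yf k" using Yf(1) k by auto
      next
        fix k1 k2 assume "k1 \<in> I" "k2 \<in> I" "k1 \<noteq> k2"
        then show "Yf k1 \<inter> Yf k2 = W" using Yf(2) by auto
      qed
    qed
  next
    assume h: "infinitely_dense_lineable2 sm M G I"
    show "dense_lineable2 sm M G I"
      unfolding dense_lineable2_def
    proof (intro conjI allI impI)
      show "lineable sm M G" using h unfolding infinitely_dense_lineable2_def by (rule conjunct1)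
    next
      fix W assume W: "subspace W \<and> dim_eq sm W G \<and> W \<subseteq> M \<union> {0}"
      have "\<exists>Y :: 'i \<Rightarrow> 'a set.
           (\<forall>k\<in>I. dense_subspace sm (Y k) \<and> dim_eq sm (Y k) I \<and> W \<subseteq> Y k \<and> Y k \<subseteq> M \<union> {0})
         \<and> (\<forall>k1\<in>I. \<forall>k2\<in>I. k1 \<noteq> k2 \<longrightarrow> Y k1 \<inter> Y k2 = W)"
        using conjunct2[OF h[unfolded infinitely_dense_lineable2_def], rule_format, OF W] .
      then obtain Y :: "'i \<Rightarrow> 'a set" where YC:
           "(\<forall>k\<in>I. dense_subspace sm (Y k) \<and> dim_eq sm (Y k) I \<and> W \<subseteq> Y k \<and> Y k \<subseteq> M \<union> {0})
         \<and> (\<forall>k1\<in>I. \<forall>k2\<in>I. k1 \<noteq> k2 \<longrightarrow> Y k1 \<inter> Y k2 = W)" ..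
      have "dense_subspace sm (Y k0) \<and> dim_eq sm (Y k0) I \<and> W \<subseteq> Y k0 \<and> Y k0 \<subseteq> M \<union> {0}"
        using conjunct1[OF YC] k0 by (rule bspec)
      then show "\<exists>Y. dense_subspace sm Y \<and> dim_eq sm Y I \<and> W \<subseteq> Y \<and> Y \<subseteq> M \<union> {0}"
        by (rule exI)
    qed
  qed
  show ?thesis
  proof (intro conjI allI impI)
    show "pointwise_dense_lineable sm M I \<longleftrightarrow> infinitely_pointwise_dense_lineable sm M I" by (rule p1)
  next
    fix G :: "'g set" assume "(card_of G, card_of I) \<in> ordLess"
    then show "dense_lineable2 sm M G I \<longleftrightarrow> infinitely_dense_lineable2 sm M G I" by (rule p2)
  qed
qed


end
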